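(* Let $k$ be a positive integer and $L\in\mathcal L_k$. Place each vertex of $V$ at the corresponding point of $\mathbb Q\cup\{\infty\}\subset\mathbb R\cup\{\infty\}=\partial_\infty\mathbb H$ of the hyperbolic plane $\mathbb H$ (upper half-plane model), and draw each edge of $\mathcal F_k$ whose two endpoints both lie in $\phi_k^{-1}(L)$ as the hyperbolic geodesic joining its endpoints. Then any two distinct such geodesics are disjoint in $\mathbb H$; that is, this drawing is a planar embedding of the subgraph of $\mathcal F_k$ induced on $\phi_k^{-1}(L)$.
   Context: The vertex set $V$ consists of all reduced fractions $p/q$ with $p,q\in\mathbb Z$, $\gcd(p,q)=1$, together with $1/0$ (identified with $\infty$); here $p/q$ and $(-p)/(-q)$ denote the same vertex. For vertices define $d(p/q,a/b)=|pb-qa|$. The graph $\mathcal F_k$ has vertex set $V$, with an edge between $p/q$ and $a/b$ exactly when $d(p/q,a/b)=k$. An element $(a,b)\in(\mathbb Z/k\mathbb Z)^2$ is admissible if for $\lambda\in\mathbb Z/k\mathbb Z$, $(\lambda a,\lambda b)=0$ implies $\lambda=0$; $\mathcal L_k$ is the set of admissible elements modulo $v\sim\lambda v$ for units $\lambda\in(\mathbb Z/k\mathbb Z)^*$; $\phi_k:V\to\mathcal L_k$ sends $p/q$ to the class of $(p\bmod k,q\bmod k)$. *)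

theory Defs
  imports Complex_Main
begin

text \<open>A vertex p/q is represented by a pair (p,q) of coprime integers;
  (p,q) and (-p,-q) represent the same vertex, and (1,0), (-1,0) represent infinity.
  All notions below are invariant under this sign change.\<close>

definition Vert :: "(int \<times> int) set" where
  "Vert = {(p, q). coprime p q}"

definition dist_F :: "int \<times> int \<Rightarrow> int \<times> int \<Rightarrow> int" where
  "dist_F v w = \<bar>fst v * snd w - snd v * fst w\<bar>"

text \<open>Z/kZ is represented by {0..<k}.\<close>

definition admissible :: "int \<Rightarrow> int \<times> int \<Rightarrow> bool" where
  "admissible k v \<longleftrightarrow> fst v \<in> {0..<k} \<and> snd v \<in> {0..<k} \<and>
     (\<forall>l\<in>{0..<k}. (l * fst v) mod k = 0 \<and> (l * snd v) mod k = 0 \<longrightarrow> l = 0)"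

definition unit_class :: "int \<Rightarrow> int \<times> int \<Rightarrow> (int \<times> int) set" where
  "unit_class k v = {((u * fst v) mod k, (u * snd v) mod k) | u. u \<in> {0..<k} \<and> coprime u k}"

definition Lk :: "int \<Rightarrow> (int \<times> int) set set" where
  "Lk k = unit_class k ` {v. admissible k v}"

definition phi :: "int \<Rightarrow> int \<times> int \<Rightarrow> (int \<times> int) set" where
  "phi k v = unit_class k (fst v mod k, snd v mod k)"

definition geod :: "int \<times> int \<Rightarrow> int \<times> int \<Rightarrow> complex set" where
  "geod v w =
    (if snd v = 0 then {z. Re z = real_of_int (fst w) / real_of_int (snd w) \<and> Im z > 0}
     else if snd w = 0 then {z. Re z = real_of_int (fst v) / real_of_int (snd v) \<and> Im z > 0}
     else (let x = real_of_int (fst v) / real_of_int (snd v);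
               y = real_of_int (fst w) / real_of_int (snd w)
           in {z. Im z > 0 \<and> cmod (z - complex_of_real ((x + y) / 2)) = \<bar>x - y\<bar> / 2}))"

end

theory Submission
  imports Defs
begin

lemma cong_det:
  assumes "k > 0" "phi k v = phi k w"
  shows "k dvd (fst v * snd w - snd v * fst w)"
proof (cases "k = 1")
  case True then show ?thesis by simp
next
  case False
  have "(fst w mod k, snd w mod k) \<in> phi k w"
    unfolding phi_def unit_class_def using False assms(1)
    by (auto intro!: exI[of _ 1])
  then have "(fst w mod k, snd w mod k) \<in> phi k v" using assms by simp
  then obtain u where u: "fst w mod k = (u * (fst v mod k)) mod k" "snd w mod k = (u * (snd v mod k)) mod k"
    unfolding phi_def unit_class_def by auto
  have a: "fst w mod k = (u * fst v) mod k" using u(1) by (simp add: mod_mult_right_eq)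
  have b: "snd w mod k = (u * snd v) mod k" using u(2) by (simp add: mod_mult_right_eq)
  have "(fst v * snd w - snd v * fst w) mod k = (fst v * (u * snd v) - snd v * (u * fst v)) mod k"
    by (metis a b mod_diff_cong mod_mult_right_eq)
  also have "\<dots> = 0" by (simp add: algebra_simps)
  finally show ?thesis by (simp add: mod_eq_0_iff_dvd)
qed

definition gA :: "int \<times> int \<Rightarrow> int \<times> int \<Rightarrow> real" where
  "gA v w = of_int (snd v * snd w)"
definition gB :: "int \<times> int \<Rightarrow> int \<times> int \<Rightarrow> real" where
  "gB v w = - of_int (fst v * snd w + snd v * fst w)"
definition gC :: "int \<times> int \<Rightarrow> int \<times> int \<Rightarrow> real" where
  "gC v w = of_int (fst v * fst w)"

lemma geod_char:
  assumes "fst v * snd w - snd v * fst w \<noteq> 0"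
  shows "z \<in> geod v w \<longleftrightarrow> Im z > 0 \<and>
     gA v w * (Re z ^ 2 + Im z ^ 2) + gB v w * Re z + gC v w = 0"
proof -
  obtain p q where v: "v = (p, q)" by force
  obtain r s where w: "w = (r, s)" by force
  have d: "p * s - q * r \<noteq> 0" using assms v w by simp
  show ?thesis
  proof (cases "q = 0")
    case True
    then have "s \<noteq> 0" "p \<noteq> 0" using d by auto
    then show ?thesis using True unfolding geod_def gA_def gB_def gC_def v w
      by (auto simp: field_simps)
  next
    case q: False
    show ?thesis
    proof (cases "s = 0")
      case True
      then have "r \<noteq> 0" using d by auto
      then show ?thesis using True q unfolding geod_def gA_def gB_def gC_def v w
        by (auto simp: field_simps)
    next
      case s: False
      define x where "x = real_of_int p / of_int q"
      define y where "y = real_of_int r / of_int s"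
      have "cmod (z - complex_of_real ((x + y) / 2)) = \<bar>x - y\<bar> / 2 \<longleftrightarrow>
            (cmod (z - complex_of_real ((x + y) / 2)))^2 = (\<bar>x - y\<bar> / 2)^2"
        by (simp add: power2_eq_iff_nonneg)
      also have "\<dots> \<longleftrightarrow> (Re z - (x+y)/2)^2 + Im z ^2 = (x - y)^2/4"
        by (simp add: cmod_power2 power_divide)
      also have "\<dots> \<longleftrightarrow> Re z ^ 2 + Im z ^ 2 - (x + y) * Re z + x * y = 0"
        by (simp add: power2_eq_square field_simps) (intro iffI; linarith)
      also have "\<dots> \<longleftrightarrow> of_int (q*s) * (Re z ^ 2 + Im z ^ 2 - (x + y) * Re z + x * y) = 0"
        using q s by simp
      also have "\<dots> \<longleftrightarrow> gA v w * (Re z ^ 2 + Im z ^ 2) + gB v w * Re z + gC v w = 0"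
      proof -
        have "of_int (q*s) * (Re z ^ 2 + Im z ^ 2 - (x + y) * Re z + x * y)
           = gA v w * (Re z ^ 2 + Im z ^ 2) + gB v w * Re z + gC v w"
          unfolding gA_def gB_def gC_def v w x_def y_def using q s
          by (simp add: field_simps)
        then show ?thesis by simp
      qed
      finally show ?thesis using q s unfolding geod_def v w x_def y_def Let_def
        by auto
    qed
  qed
qed

definition Dt :: "int \<times> int \<Rightarrow> int \<times> int \<Rightarrow> int" where
  "Dt a b = fst a * snd b - snd a * fst b"

lemma P_id: "gB v w * gB v' w' - 2 * gA v w * gC v' w' - 2 * gA v' w' * gC v w
   = - of_int (Dt v v' * Dt w w' + Dt v w' * Dt w v')"
  unfolding gA_def gB_def gC_def Dt_def by (simp add: algebra_simps)

lemma Q_id: "gB v w ^ 2 - 4 * gA v w * gC v w = of_int (Dt v w) ^ 2"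
  unfolding gA_def gB_def gC_def Dt_def by (simp add: algebra_simps power2_eq_square)

lemma pl_id: "Dt v w * Dt v' w' = Dt v v' * Dt w w' - Dt v w' * Dt w v'"
  unfolding Dt_def by (simp add: algebra_simps)

lemma int_part:
  fixes k a1 a2 a3 a4 :: int
  assumes "k > 0" "\<bar>k*a1*(k*a2) - k*a3*(k*a4)\<bar> = k^2"
  shows "\<bar>k*a1*(k*a2) + k*a3*(k*a4)\<bar> \<ge> k^2"
proof -
  have "k*a1*(k*a2) - k*a3*(k*a4) = k^2 * (a1*a2 - a3*a4)"
       "k*a1*(k*a2) + k*a3*(k*a4) = k^2 * (a1*a2 + a3*a4)" by (simp_all add: algebra_simps power2_eq_square)
  moreover have "k^2 > 0" using assms by simp
  ultimately have h: "\<bar>a1*a2 - a3*a4\<bar> = 1"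
    using assms(2) by (simp add: abs_mult)
  have "a1*a2 + a3*a4 \<noteq> 0"
  proof
    assume "a1*a2 + a3*a4 = 0"
    then have "a1*a2 - a3*a4 = 2 * (a1*a2)" by simp
    with h show False by presburger
  qed
  then have "\<bar>a1*a2 + a3*a4\<bar> \<ge> 1" by linarith
  then have "k^2 * 1 \<le> k^2 * \<bar>a1*a2 + a3*a4\<bar>" using \<open>k^2>0\<close>
    by (intro mult_left_mono) auto
  with \<open>k*a1*(k*a2) + k*a3*(k*a4) = _\<close> show ?thesis by (simp add: abs_mult)
qed

lemma real_part:
  fixes A1 B1 C1 A2 B2 C2 x y K :: real
  assumes y: "y > 0"
    and e1: "A1 * (x^2 + y^2) + B1 * x + C1 = 0"
    and e2: "A2 * (x^2 + y^2) + B2 * x + C2 = 0"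
    and q1: "B1^2 - 4*A1*C1 = K" and q2: "B2^2 - 4*A2*C2 = K" and K: "K > 0"
    and P: "(B1*B2 - 2*A1*C2 - 2*A2*C1)^2 \<ge> K^2"
  shows "\<exists>c. c \<noteq> 0 \<and> A2 = c*A1 \<and> B2 = c*B1 \<and> C2 = c*C1"
proof -
  define u1 where "u1 = B1 + 2*A1*x"
  define u2 where "u2 = B2 + 2*A2*x"
  define t1 where "t1 = 2*A1*y"
  define t2 where "t2 = 2*A2*y"
  have c1: "C1 = - A1 * (x^2 + y^2) - B1 * x" using e1 by linarith
  have c2: "C2 = - A2 * (x^2 + y^2) - B2 * x" using e2 by linarith
  have Q1: "K = u1^2 + t1^2" unfolding u1_def t1_def q1[symmetric] c1
    by (simp add: algebra_simps power2_eq_square)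
  have Q2: "K = u2^2 + t2^2" unfolding u2_def t2_def q2[symmetric] c2
    by (simp add: algebra_simps power2_eq_square)
  have PP: "B1*B2 - 2*A1*C2 - 2*A2*C1 = u1*u2 + t1*t2" unfolding u1_def u2_def t1_def t2_def c1 c2
    by (simp add: algebra_simps power2_eq_square)
  have "K^2 = (u1^2 + t1^2) * (u2^2 + t2^2)" using Q1 Q2 by (simp add: power2_eq_square)
  then have "K^2 - (u1*u2 + t1*t2)^2 = (u1*t2 - u2*t1)^2"
    by (simp add: algebra_simps power2_eq_square)
  moreover have "K^2 \<le> (u1 * u2 + t1 * t2)^2" using P PP by simp
  ultimately have "(u1*t2 - u2*t1)^2 \<le> 0" by linarith
  then have "u1*t2 - u2*t1 = 0" by (metis power_zero_numeral sum_power2_le_zero_iff add_0)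
  then have "2*y*(A2*B1 - A1*B2) = 0" unfolding u1_def u2_def t1_def t2_def
    by (simp add: algebra_simps)
  then have ab: "A2*B1 = A1*B2" using y by simp
  show ?thesis
  proof (cases "A1 = 0")
    case False
    define c where "c = A2 / A1"
    have "A2 = c*A1" "B2 = c*B1" using False ab unfolding c_def by (auto simp: field_simps)
    moreover have "C2 = c*C1" unfolding c1 c2 using \<open>A2 = c*A1\<close> \<open>B2 = c*B1\<close>
      by (simp add: algebra_simps)
    moreover have "c \<noteq> 0" using K q2 calculation by auto
    ultimately show ?thesis by blast
  next
    case True
    then have "B1 \<noteq> 0" using q1 K by auto
    then have "A2 = 0" using True ab by simp
    define c where "c = B2 / B1"
    have "A2 = c*A1" "B2 = c*B1" using True \<open>A2 = 0\<close> \<open>B1 \<noteq> 0\<close> unfolding c_def by auto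
    moreover have "C2 = c*C1" unfolding c1 c2 using \<open>A2 = c*A1\<close> \<open>B2 = c*B1\<close>
      by (simp add: algebra_simps)
    moreover have "c \<noteq> 0" using K q2 calculation by auto
    ultimately show ?thesis by blast
  qed
qed

theorem proposition4p11:
  fixes k :: int and L :: "(int \<times> int) set" and v w v' w' :: "int \<times> int"
  assumes "k > 0" and "L \<in> Lk k"
    and "v \<in> Vert" "w \<in> Vert" "v' \<in> Vert" "w' \<in> Vert"
    and "phi k v = L" "phi k w = L" "phi k v' = L" "phi k w' = L"
    and "dist_F v w = k" "dist_F v' w' = k"
    and "geod v w \<noteq> geod v' w'"
  shows "geod v w \<inter> geod v' w' = {}"
proof (rule ccontr)
  assume "geod v w \<inter> geod v' w' \<noteq> {}"
  then obtain z where z: "z \<in> geod v w" "z \<in> geod v' w'" by blast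
  have d1: "\<bar>Dt v w\<bar> = k" and d2: "\<bar>Dt v' w'\<bar> = k"
    using assms(11,12) unfolding dist_F_def Dt_def by auto
  have n1: "fst v * snd w - snd v * fst w \<noteq> 0" using d1 assms(1) unfolding Dt_def by auto
  have n2: "fst v' * snd w' - snd v' * fst w' \<noteq> 0" using d2 assms(1) unfolding Dt_def by auto
  have "k dvd Dt v v'" "k dvd Dt w w'" "k dvd Dt v w'" "k dvd Dt w v'"
    unfolding Dt_def using cong_det[OF assms(1)] assms(7-10) by simp_all
  then obtain a1 a2 a3 a4 where a: "Dt v v' = k*a1" "Dt w w' = k*a2" "Dt v w' = k*a3" "Dt w v' = k*a4"
    by (metis dvdE)
  have "\<bar>Dt v w * Dt v' w'\<bar> = k^2" using d1 d2 by (simp add: abs_mult power2_eq_square)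
  then have "\<bar>k*a1*(k*a2) - k*a3*(k*a4)\<bar> = k^2" using pl_id[of v w v' w'] a by simp
  from int_part[OF assms(1) this]
  have ge: "\<bar>Dt v v' * Dt w w' + Dt v w' * Dt w v'\<bar> \<ge> k^2" using a by simp
  let ?K = "real_of_int k ^ 2"
  have "?K^2 \<le> (of_int (Dt v v' * Dt w w' + Dt v w' * Dt w v'))^2"
  proof -
    have "real_of_int (k^2) \<le> \<bar>of_int (Dt v v' * Dt w w' + Dt v w' * Dt w v')\<bar>"
      using ge by linarith
    then have "?K \<le> \<bar>of_int (Dt v v' * Dt w w' + Dt v w' * Dt w v')\<bar>" by simp
    then have "?K^2 \<le> \<bar>of_int (Dt v v' * Dt w w' + Dt v w' * Dt w v')\<bar>^2"
      by (intro power_mono) auto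
    then show ?thesis by simp
  qed
  then have P: "?K^2 \<le> (gB v w * gB v' w' - 2 * gA v w * gC v' w' - 2 * gA v' w' * gC v w)^2"
    unfolding P_id power2_minus by simp
  have q1: "gB v w ^ 2 - 4 * gA v w * gC v w = ?K"
    unfolding Q_id using d1 by (metis of_int_abs power2_abs)
  have q2: "gB v' w' ^ 2 - 4 * gA v' w' * gC v' w' = ?K"
    unfolding Q_id using d2 by (metis of_int_abs power2_abs)
  have K: "?K > 0" using assms(1) by simp
  have e1: "Im z > 0" "gA v w * (Re z ^ 2 + Im z ^ 2) + gB v w * Re z + gC v w = 0"
    using z(1) geod_char[OF n1] by auto
  have e2: "gA v' w' * (Re z ^ 2 + Im z ^ 2) + gB v' w' * Re z + gC v' w' = 0"
    using z(2) geod_char[OF n2] by auto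
  obtain c where c: "c \<noteq> 0" "gA v' w' = c * gA v w" "gB v' w' = c * gB v w" "gC v' w' = c * gC v w"
    using real_part[OF e1(1) e1(2) e2 q1 q2 K P] by blast
  have "geod v w = geod v' w'"
  proof
    show "geod v w \<subseteq> geod v' w'"
    proof
      fix t assume "t \<in> geod v w"
      then have "Im t > 0" "gA v w * (Re t ^ 2 + Im t ^ 2) + gB v w * Re t + gC v w = 0"
        using geod_char[OF n1] by auto
      then have "Im t > 0" "gA v' w' * (Re t ^ 2 + Im t ^ 2) + gB v' w' * Re t + gC v' w' = 0"
        unfolding c(2-4) by (auto simp: algebra_simps) (metis distrib_left mult_zero_right)
      then show "t \<in> geod v' w'" using geod_char[OF n2] by auto
    qed
  next
    show "geod v' w' \<subseteq> geod v w"
    proof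
      fix t assume "t \<in> geod v' w'"
      then have "Im t > 0" "gA v' w' * (Re t ^ 2 + Im t ^ 2) + gB v' w' * Re t + gC v' w' = 0"
        using geod_char[OF n2] by auto
      then have "Im t > 0" "c * (gA v w * (Re t ^ 2 + Im t ^ 2) + gB v w * Re t + gC v w) = 0"
        unfolding c(2-4) by (auto simp: algebra_simps)
      then have "Im t > 0" "gA v w * (Re t ^ 2 + Im t ^ 2) + gB v w * Re t + gC v w = 0"
        using c(1) by auto
      then show "t \<in> geod v w" using geod_char[OF n1] by auto
    qed
  qed
  with assms(13) show False by simp
qed

end
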